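(* Let $\frac{4}{3}\le p\le\frac{\log 3}{\log 2}$. The function $L(\alpha)=1+2\sin^p(\frac{\alpha}{2})+\cos^p\alpha$ on $\alpha\in[0,\frac{\pi}{3}]$ attains its minimum at the endpoints of the interval. In particular $L(\alpha)\ge 2$ for all $\alpha\in[0,\frac{\pi}{3}]$. *)

theory Defs
  imports Complex_Main
begin

definition Lfun :: "real \<Rightarrow> real \<Rightarrow> real" where
  "Lfun p \<alpha> = 1 + 2 * (sin (\<alpha> / 2)) powr p + (cos \<alpha>) powr p"

end

theory Submission
  imports Defs
begin

lemma key:
  fixes p y :: real
  assumes p0: "0 < p" and p2: "p < 2" and p3: "2 powr p \<le> 3" and y0: "0 \<le> y" and y1: "y \<le> 1/4"
  shows "2 * y powr (p/2) + (1 - 2*y) powr p \<ge> 1"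
proof -
  define h where "h y = 2 * y powr (p/2) + (1 - 2*y) powr p - 1" for y
  define h' where "h' y = p * y powr (p/2 - 1) - 2 * p * (1 - 2*y) powr (p - 1)" for y
  define \<phi> where "\<phi> y = (p/2 - 1) * ln y - ln 2 - (p - 1) * ln (1 - 2*y)" for y
  have dh: "(h has_real_derivative h' x) (at x)" if "0 < x" "x < 1/2" for x
  proof -
    have a: "((\<lambda>z. z powr (p/2)) has_real_derivative (p/2) * x powr (p/2 - 1)) (at x)"
      using has_real_derivative_powr[OF \<open>0 < x\<close>] .
    have b0: "((\<lambda>z. z powr p) has_real_derivative p * (1 - 2*x) powr (p - 1)) (at (1 - 2*x))"
      using has_real_derivative_powr[of "1 - 2*x" p] that by simp
    have b1: "((\<lambda>z. 1 - 2*z) has_real_derivative -2) (at x)"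
      by (auto intro!: derivative_eq_intros)
    have b: "((\<lambda>z. (1 - 2*z) powr p) has_real_derivative p * (1 - 2*x) powr (p - 1) * (-2)) (at x)"
      using DERIV_chain2[OF b0 b1] by simp
    have "((\<lambda>z. 2 * z powr (p/2) + (1 - 2*z) powr p - 1) has_real_derivative
           2 * ((p/2) * x powr (p/2 - 1)) + p * (1 - 2*x) powr (p - 1) * (-2) - 0) (at x)"
      by (intro DERIV_diff DERIV_add DERIV_cmult a b DERIV_const)
    then show ?thesis unfolding h_def h'_def by (simp add: algebra_simps)
  qed
  have cont: "continuous_on {0..1/4} h"
    unfolding h_def using p0
    by (intro continuous_intros continuous_on_powr') (auto intro!: continuous_intros)
  have h0: "h 0 = 0" unfolding h_def by simp
  have h14: "h (1/4) \<ge> 0"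
  proof -
    have e1: "(1/4::real) powr (p/2) = 1 / 2 powr p"
    proof -
      have q: "(1/4::real) = (1/2) powr 2" by (simp add: power2_eq_square)
      have "(1/4::real) powr (p/2) = ((1/2) powr 2) powr (p/2)" by (subst q) (rule refl)
      also have "\<dots> = (1/2) powr p" by (simp only: powr_powr) simp
      also have "\<dots> = 1 / 2 powr p" using powr_divide[of 1 2 p] by simp
      finally show ?thesis .
    qed
    have e2: "(1 - 2 * (1/4::real)) powr p = 1 / 2 powr p"
      using powr_divide[of 1 2 p] by simp
    have "h (1/4) = 3 / 2 powr p - 1" unfolding h_def e1 e2 by simp
    moreover have "3 / 2 powr p \<ge> 1" using p3 by simp
    ultimately show ?thesis by simp
  qed
  have sneg: "\<phi> x < 0" if "0 < x" "x < 1/2" "h' x < 0" for x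
  proof -
    have "x powr (p/2 - 1) < 2 * (1 - 2*x) powr (p - 1)" using that p0 unfolding h'_def
      by (simp add: algebra_simps)
    then have "ln (x powr (p/2 - 1)) < ln (2 * (1 - 2*x) powr (p - 1))"
      using that by (subst ln_less_cancel_iff) auto
    then show ?thesis using that unfolding \<phi>_def by (simp add: ln_mult ln_powr)
  qed
  have spos: "\<phi> x > 0" if "0 < x" "x < 1/2" "h' x > 0" for x
  proof -
    have "x powr (p/2 - 1) > 2 * (1 - 2*x) powr (p - 1)" using that p0 unfolding h'_def
      by (simp add: algebra_simps)
    then have "ln (x powr (p/2 - 1)) > ln (2 * (1 - 2*x) powr (p - 1))"
      using that by (subst ln_less_cancel_iff) auto
    then show ?thesis using that unfolding \<phi>_def by (simp add: ln_mult ln_powr)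
  qed
  have phi14: "\<phi> (1/4) = 0"
  proof -
    have l4: "ln (1/4::real) = - 2 * ln 2"
    proof -
      have "ln (1/4::real) = - ln 4" using ln_divide_pos[of 1 4] by simp
      moreover have "ln (2*2::real) = ln 2 + ln 2" by (rule ln_mult_pos) auto
      ultimately show ?thesis by simp
    qed
    have l2: "ln (1 - 2 * (1/4::real)) = - ln 2"
    proof -
      have "(1 - 2 * (1/4::real)) = 1/2" by simp
      then show ?thesis using ln_divide_pos[of 1 2] by simp
    qed
    show ?thesis unfolding \<phi>_def l4 l2 by (simp add: algebra_simps)
  qed
  have dphi: "(\<phi> has_real_derivative ((p/2 - 1) / x + 2 * (p - 1) / (1 - 2*x))) (at x)"
    if "0 < x" "x < 1/2" for x
  proof -
    have l1: "(ln has_real_derivative inverse x) (at x)" using that by (intro DERIV_ln) auto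
    have l2: "(ln has_real_derivative inverse (1 - 2*x)) (at (1 - 2*x))" using that by (intro DERIV_ln) auto
    have l3: "((\<lambda>z. 1 - 2*z) has_real_derivative -2) (at x)"
      by (auto intro!: derivative_eq_intros)
    have l4: "((\<lambda>z. ln (1 - 2*z)) has_real_derivative inverse (1 - 2*x) * (-2)) (at x)"
      using DERIV_chain2[OF l2 l3] .
    have "((\<lambda>z. (p/2 - 1) * ln z - ln 2 - (p - 1) * ln (1 - 2*z)) has_real_derivative
       (p/2 - 1) * inverse x - 0 - (p - 1) * (inverse (1 - 2*x) * (-2))) (at x)"
      by (rule DERIV_diff[OF DERIV_diff[OF DERIV_cmult[OF l1] DERIV_const] DERIV_cmult[OF l4]])
    moreover have "(p/2 - 1) * inverse x - 0 - (p - 1) * (inverse (1 - 2*x) * (-2)) = (p/2 - 1) / x + 2 * (p - 1) / (1 - 2*x)"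
      unfolding divide_inverse by (simp add: algebra_simps)
    ultimately show ?thesis unfolding \<phi>_def by simp
  qed
  have dform: "(p/2 - 1) / x + 2 * (p - 1) / (1 - 2*x) = ((p/2 - 1) + p * x) / (x * (1 - 2*x))"
    if "0 < x" "x < 1/2" for x
  proof -
    have "x \<noteq> 0" "1 - 2*x \<noteq> 0" using that by auto
    then show ?thesis by (simp add: field_simps)
  qed
  have diffh: "h differentiable (at x)" if "0 < x" "x < 1/2" for x
    using dh[OF that] real_differentiable_def by blast
  show ?thesis
  proof (rule ccontr)
    assume "\<not> ?thesis"
    then have hy: "h y < 0" unfolding h_def by simp
    have ypos: "0 < y" using hy h0 y0 by (cases "y = 0") auto
    have ylt: "y < 1/4" using hy h14 y1 by (cases "y = 1/4") auto
    have c1: "continuous_on {0..y} h" by (rule continuous_on_subset[OF cont]) (use ylt in auto)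
    have c2: "continuous_on {y..1/4} h" by (rule continuous_on_subset[OF cont]) (use ypos in auto)
    obtain l a where a: "0 < a" "a < y" "DERIV h a :> l" "h y - h 0 = (y - 0) * l"
      using MVT[OF ypos c1] diffh ylt by force
    have "l = h' a" using DERIV_unique[OF a(3) dh] a ylt by simp
    moreover have "l < 0" using a(4) hy h0 ypos by (simp add: mult_less_0_iff)
    ultimately have pa: "\<phi> a < 0" using sneg a ylt by simp
    obtain m b where b: "y < b" "b < 1/4" "DERIV h b :> m" "h (1/4) - h y = (1/4 - y) * m"
      using MVT[OF ylt c2] diffh ypos by force
    have "m = h' b" using DERIV_unique[OF b(3) dh] b ypos by simp
    moreover have "m > 0"
    proof -
      have "(1/4 - y) * m > 0" using b(4) hy h14 by linarith
      then show "m > 0" using ylt by (simp add: zero_less_mult_iff)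
    qed
    ultimately have pb: "\<phi> b > 0" using spos b ypos by simp
    show False
    proof (cases "b \<le> 1/p - 1/2")
      case True
      have "\<phi> b \<le> \<phi> a"
      proof (rule DERIV_nonpos_imp_nonincreasing[of a b \<phi>])
        show "a \<le> b" using a b by simp
        fix x assume x: "a \<le> x" "x \<le> b"
        have x0: "0 < x" "x < 1/2" using x a b by auto
        have e: "p * (1/p - 1/2) = 1 - p/2" using p0 by (simp add: field_simps)
        have "p * x \<le> p * (1/p - 1/2)" using True x p0 by (intro mult_left_mono) auto
        then have "p * x \<le> 1 - p/2" using e by simp
        then have "((p/2 - 1) + p * x) / (x * (1 - 2*x)) \<le> 0" using x0
          by (intro divide_nonpos_pos) auto
        then show "\<exists>d. DERIV \<phi> x :> d \<and> d \<le> 0" using dphi[OF x0] dform[OF x0] by auto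
      qed
      then show False using pa pb by simp
    next
      case False
      have "\<phi> b \<le> \<phi> (1/4)"
      proof (rule DERIV_nonneg_imp_nondecreasing[of b "1/4" \<phi>])
        show "b \<le> 1/4" using b by simp
        fix x assume x: "b \<le> x" "x \<le> 1/4"
        have x0: "0 < x" "x < 1/2" using x ypos b by auto
        have e: "p * (1/p - 1/2) = 1 - p/2" using p0 by (simp add: field_simps)
        have "p * (1/p - 1/2) \<le> p * x" using False x p0 by (intro mult_left_mono) auto
        then have "p * x \<ge> 1 - p/2" using e by simp
        then have "((p/2 - 1) + p * x) / (x * (1 - 2*x)) \<ge> 0" using x0
          by (intro divide_nonneg_pos) auto
        then show "\<exists>d. DERIV \<phi> x :> d \<and> d \<ge> 0" using dphi[OF x0] dform[OF x0] by auto
      qed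
      then show False using pb phi14 by simp
    qed
  qed
qed

theorem lemma2p5:
  fixes p :: real
  assumes "4/3 \<le> p" and "p \<le> ln 3 / ln 2"
  shows "(\<forall>\<alpha>\<in>{0..pi/3}. Lfun p \<alpha> \<ge> min (Lfun p 0) (Lfun p (pi/3)))
       \<and> (\<forall>\<alpha>\<in>{0..pi/3}. Lfun p \<alpha> \<ge> 2)"
proof -
  have p0: "0 < p" using assms(1) by simp
  have ln2: "ln (2::real) > 0" by simp
  have "p * ln 2 \<le> ln 3" using assms(2) ln2 by (simp add: le_divide_eq)
  then have p3: "2 powr p \<le> 3" unfolding powr_def
    by (simp add: mult.commute) (metis exp_le_cancel_iff exp_ln zero_less_numeral)
  have "ln (3::real) < ln 4" by simp
  also have "ln (4::real) = 2 * ln 2"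
  proof -
    have "ln (2*2::real) = ln 2 + ln 2" by (rule ln_mult_pos) auto
    then show ?thesis by simp
  qed
  finally have "ln 3 / ln 2 < (2::real)" using ln2 by (simp add: divide_less_eq)
  then have p2: "p < 2" using assms(2) by linarith
  have L0: "Lfun p 0 = 2" unfolding Lfun_def by simp
  have main: "Lfun p \<alpha> \<ge> 2" if a: "\<alpha> \<in> {0..pi/3}" for \<alpha>
  proof -
    define x where "x = sin (\<alpha>/2)"
    have x0: "0 \<le> x" unfolding x_def using a by (intro sin_ge_zero) auto
    have "x \<le> sin (pi/6)" unfolding x_def using a by (intro sin_monotone_2pi_le) auto
    then have x1: "x \<le> 1/2" by (simp add: sin_30)
    have c: "cos \<alpha> = 1 - 2 * x^2" unfolding x_def using cos_double_sin[of "\<alpha>/2"] by simp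
    have xp: "x powr p = (x^2) powr (p/2)"
    proof -
      have "(x^2) powr (p/2) = (x powr 2) powr (p/2)" using x0 by simp
      also have "\<dots> = x powr p" by (simp only: powr_powr) simp
      finally show ?thesis by simp
    qed
    have "2 * (x^2) powr (p/2) + (1 - 2 * x^2) powr p \<ge> 1"
    proof -
      have "x^2 \<le> (1/2)^2" using power_mono[OF x1 x0] .
      then have y1: "x^2 \<le> 1/4" by (simp add: power2_eq_square)
      show ?thesis using key[OF p0 p2 p3 zero_le_power2 y1] .
    qed
    then show ?thesis unfolding Lfun_def using c xp x_def by simp
  qed
  show ?thesis
  proof
    show "\<forall>\<alpha>\<in>{0..pi/3}. Lfun p \<alpha> \<ge> min (Lfun p 0) (Lfun p (pi/3))"
      using main L0 by (metis min.coboundedI1 order.trans)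
    show "\<forall>\<alpha>\<in>{0..pi/3}. Lfun p \<alpha> \<ge> 2" using main by blast
  qed
qed

end
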